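(* Let $P$ be a join-semilattice with a least element $0$, and let $L:=\mathrm{Id}(P)$ be the lattice of ideals of $P$ ordered by inclusion. Suppose that $\dim_\vee(P)=n<\omega$. Then $L$ is order-scattered if and only if $P$ is order-scattered and $P$ has no join-subsemilattice isomorphic to $\Omega(\eta)$.
   Context: An ideal of a poset $P$ is a non-empty initial segment of $P$ that is up-directed. A poset is order-scattered if it contains no subset order-isomorphic to the chain $\mathbb{Q}$ of rationals. The join-dimension $\dim_\vee(P)$ of a join-semilattice $P$ is the least cardinal $\kappa$ such that $P$ admits a one-to-one join-preserving map into a direct product of $\kappa$ chains (with the componentwise order). $\Omega(\eta)$ denotes the join-subsemilattice of the direct product $\mathbb{N}\times D$ (componentwise order), where $\mathbb{N}$ is the chain of non-negative integers and $D$ is the chain of dyadic rationals in $[0,1)$, consisting of the pairs $(n,r)$ with $2^n r\in\mathbb{Z}$; its second projection is all of $D$ and each set $(\{n\}\times D)\cap\Omega(\eta)$ is finite. *)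

theory Defs
  imports Main "HOL-Library.Extended_Nat"
begin

definition ideal_of :: "'a::order set \<Rightarrow> bool" where
  "ideal_of I \<longleftrightarrow> I \<noteq> {} \<and> (\<forall>x\<in>I. \<forall>y. y \<le> x \<longrightarrow> y \<in> I)
     \<and> (\<forall>x\<in>I. \<forall>y\<in>I. \<exists>z\<in>I. x \<le> z \<and> y \<le> z)"

definition Ideals :: "'a::order set set" where
  "Ideals = {I. ideal_of I}"

definition order_scattered_on :: "'b set \<Rightarrow> ('b \<Rightarrow> 'b \<Rightarrow> bool) \<Rightarrow> bool" where
  "order_scattered_on A le \<longleftrightarrow>
     \<not> (\<exists>f :: rat \<Rightarrow> 'b. range f \<subseteq> A \<and> inj f \<and> (\<forall>x y. le (f x) (f y) \<longleftrightarrow> x \<le> y))"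

text \<open>The chains are taken with elements in the type of P
  itself (no loss of generality: only the image of each coordinate map matters,
  and it has cardinality at most that of P).\<close>
definition join_embeds_chains :: "'a::semilattice_sup itself \<Rightarrow> nat \<Rightarrow> bool" where
  "join_embeds_chains _ n \<longleftrightarrow>
     (\<exists>(C :: nat \<Rightarrow> 'a set) (le :: nat \<Rightarrow> 'a \<Rightarrow> 'a \<Rightarrow> bool) (f :: nat \<Rightarrow> 'a \<Rightarrow> 'a).
        (\<forall>i<n. (\<forall>x\<in>C i. le i x x)
             \<and> (\<forall>x\<in>C i. \<forall>y\<in>C i. le i x y \<and> le i y x \<longrightarrow> x = y)
             \<and> (\<forall>x\<in>C i. \<forall>y\<in>C i. \<forall>z\<in>C i. le i x y \<and> le i y z \<longrightarrow> le i x z)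
             \<and> (\<forall>x\<in>C i. \<forall>y\<in>C i. le i x y \<or> le i y x))
      \<and> (\<forall>i<n. \<forall>x. f i x \<in> C i)
      \<and> (\<forall>i<n. \<forall>x y. f i (sup x y) = (if le i (f i x) (f i y) then f i y else f i x))
      \<and> (\<forall>x y. (\<forall>i<n. f i x = f i y) \<longrightarrow> x = y))"

definition join_dim :: "'a::semilattice_sup itself \<Rightarrow> enat" where
  "join_dim T = (if \<exists>n. join_embeds_chains T n
                 then enat (LEAST n. join_embeds_chains T n) else \<infinity>)"

text \<open>Omega(eta) inside N x D, with componentwise order and join.\<close>
definition Omega_eta :: "(nat \<times> rat) set" where
  "Omega_eta = {(n, r). 0 \<le> r \<and> r < 1 \<and> r * 2 ^ n \<in> \<int>}"

definition pair_join :: "nat \<times> rat \<Rightarrow> nat \<times> rat \<Rightarrow> nat \<times> rat" where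
  "pair_join a b = (max (fst a) (fst b), max (snd a) (snd b))"

text \<open>P has a join-subsemilattice isomorphic to Omega(eta): a one-to-one
  join-preserving map from Omega(eta) into P (its image is then a
  join-subsemilattice and the map is an order-isomorphism onto it).\<close>
definition has_Omega_eta :: "'a::semilattice_sup itself \<Rightarrow> bool" where
  "has_Omega_eta _ \<longleftrightarrow> (\<exists>g :: nat \<times> rat \<Rightarrow> 'a. inj_on g Omega_eta
     \<and> (\<forall>a\<in>Omega_eta. \<forall>b\<in>Omega_eta. g (pair_join a b) = sup (g a) (g b)))"

end

theory Submission
  imports Defs "HOL-Library.Countable"
begin


definition pickw :: "rat set \<Rightarrow> rat set \<Rightarrow> rat \<times> rat" where
  "pickw Ls Rs = (if Ls = {} then (if Rs = {} then (0,1) else (Min Rs - 2, Min Rs - 1))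
     else (if Rs = {} then (Max Ls + 1, Max Ls + 2)
           else (Max Ls + (Min Rs - Max Ls)/3, Max Ls + 2*(Min Rs - Max Ls)/3)))"

lemma pickw_prop:
  assumes "finite Ls" "finite Rs" "\<forall>l\<in>Ls. \<forall>r\<in>Rs. l < r"
  shows "fst (pickw Ls Rs) < snd (pickw Ls Rs) \<and> (\<forall>l\<in>Ls. l < fst (pickw Ls Rs))
     \<and> (\<forall>r\<in>Rs. snd (pickw Ls Rs) < r)"
proof (cases "Ls = {}")
  case True
  then show ?thesis using assms by (auto simp: pickw_def dest: Min_le[OF assms(2)])
next
  case False
  note LF = False
  show ?thesis
  proof (cases "Rs = {}")
    case True
    then show ?thesis using assms LF by (auto simp: pickw_def dest: Max_ge[OF assms(1)])
  next
    case False
    have M: "Max Ls < Min Rs" using assms LF False by auto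
    have A: "\<forall>l\<in>Ls. l \<le> Max Ls" using assms(1) by auto
    have B: "\<forall>r\<in>Rs. Min Rs \<le> r" using assms(2) by auto
    have "\<forall>l\<in>Ls. l < Max Ls + (Min Rs - Max Ls)/3"
    proof
      fix l assume "l \<in> Ls" then have "l \<le> Max Ls" using A by blast
      then show "l < Max Ls + (Min Rs - Max Ls)/3" using M by (simp add: field_simps)
    qed
    moreover have "\<forall>r\<in>Rs. Max Ls + 2*(Min Rs - Max Ls)/3 < r"
    proof
      fix r assume "r \<in> Rs" then have "Min Rs \<le> r" using B by blast
      then show "Max Ls + 2*(Min Rs - Max Ls)/3 < r" using M by (simp add: field_simps)
    qed
    moreover have "Max Ls + (Min Rs - Max Ls)/3 < Max Ls + 2*(Min Rs - Max Ls)/3" using M by (simp add: field_simps)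
    ultimately show ?thesis using LF False by (simp add: pickw_def)
  qed
qed

definition EE :: "nat \<Rightarrow> rat" where "EE = from_nat"

definition nw :: "(nat \<Rightarrow> rat \<times> rat) \<Rightarrow> nat \<Rightarrow> rat \<times> rat" where
  "nw w k = pickw {snd (w j) | j. j < k \<and> EE j < EE k} {fst (w j) | j. j < k \<and> EE k < EE j}"

primrec ws :: "nat \<Rightarrow> nat \<Rightarrow> rat \<times> rat" where
  "ws 0 = (\<lambda>_. (0,1))"
| "ws (Suc k) = (ws k)(k := nw (ws k) k)"

lemma ws_stable: "j < k \<Longrightarrow> ws k j = ws (Suc j) j"
proof (induction k)
  case 0 then show ?case by simp
next
  case (Suc k)
  then show ?case by (cases "j = k") auto
qed

lemma ws_inv: "(\<forall>j<k. fst (ws k j) < snd (ws k j)) \<and>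
   (\<forall>i j. i < k \<longrightarrow> j < k \<longrightarrow> EE i < EE j \<longrightarrow> snd (ws k i) < fst (ws k j))"
proof (induction k)
  case 0 then show ?case by simp
next
  case (Suc k)
  let ?Ls = "{snd (ws k j) | j. j < k \<and> EE j < EE k}"
  let ?Rs = "{fst (ws k j) | j. j < k \<and> EE k < EE j}"
  have fin: "finite ?Ls" "finite ?Rs" by auto
  have sep: "\<forall>l\<in>?Ls. \<forall>r\<in>?Rs. l < r" using Suc.IH by auto
  note P = pickw_prop[OF fin sep, folded nw_def]
  have P': "fst (nw (ws k) k) < snd (nw (ws k) k) \<and> (\<forall>l\<in>?Ls. l < fst (nw (ws k) k))
     \<and> (\<forall>r\<in>?Rs. snd (nw (ws k) k) < r)" using P by (simp add: nw_def)
  show ?case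
  proof (intro conjI allI impI)
    fix j assume "j < Suc k"
    then show "fst (ws (Suc k) j) < snd (ws (Suc k) j)" using Suc.IH P' by (cases "j = k") auto
  next
    fix i j assume ij: "i < Suc k" "j < Suc k" "EE i < EE j"
    show "snd (ws (Suc k) i) < fst (ws (Suc k) j)"
    proof (cases "i = k")
      case True
      then have "j < k" using ij by (metis less_Suc_eq less_irrefl)
      then have "snd (nw (ws k) k) < fst (ws k j)" using True ij P' by blast
      then show ?thesis using True \<open>j < k\<close> by simp
    next
      case False
      show ?thesis
      proof (cases "j = k")
        case True
        have "i < k" using False ij by (metis less_Suc_eq)
        then show ?thesis using True ij P' by auto
      next
        case False2: False
        then show ?thesis using False ij Suc.IH by auto
      qed
    qed
  qed
qed

lemma gap_exists: "\<exists>\<alpha> \<beta> :: rat \<Rightarrow> rat. (\<forall>q. \<alpha> q < \<beta> q) \<and> (\<forall>q q'. q < q' \<longrightarrow> \<beta> q < \<alpha> q')"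
proof -
  define \<alpha> where "\<alpha> q = fst (ws (Suc (to_nat q)) (to_nat q))" for q :: rat
  define \<beta> where "\<beta> q = snd (ws (Suc (to_nat q)) (to_nat q))" for q :: rat
  have EEt: "EE (to_nat q) = q" for q :: rat by (simp add: EE_def)
  have 1: "\<alpha> q < \<beta> q" for q using ws_inv[of "Suc (to_nat q)"] by (auto simp: \<alpha>_def \<beta>_def)
  have 2: "\<beta> q < \<alpha> q'" if "q < q'" for q q'
  proof -
    let ?k = "Suc (max (to_nat q) (to_nat q'))"
    have "snd (ws ?k (to_nat q)) < fst (ws ?k (to_nat q'))"
      using ws_inv[of ?k] that by (auto simp: EEt)
    then show ?thesis using ws_stable[of "to_nat q" ?k] ws_stable[of "to_nat q'" ?k]
      by (simp add: \<alpha>_def \<beta>_def)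
  qed
  show ?thesis using 1 2 by blast
qed



definition hab :: "rat \<Rightarrow> rat \<Rightarrow> rat \<Rightarrow> rat" where
  "hab a b x = a + (b - a) * (1 + x / (1 + \<bar>x\<bar>)) / 2"

lemma frac_lt_aux: "0 < (p::rat) \<Longrightarrow> 0 < q \<Longrightarrow> x * q < y * p \<Longrightarrow> x / p < y / q"
  by (simp add: divide_simps)

lemma sig_mono: "(x::rat) < y \<Longrightarrow> x / (1 + \<bar>x\<bar>) < y / (1 + \<bar>y\<bar>)"
proof -
  assume xy: "x < y"
  have px: "0 < 1 + \<bar>x\<bar>" and py: "0 < 1 + \<bar>y\<bar>" by (auto simp: add_pos_nonneg)
  have "x * (1 + \<bar>y\<bar>) < y * (1 + \<bar>x\<bar>)"
  proof (cases "0 \<le> x")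
    case True
    then have "0 < y" using xy by auto
    then show ?thesis using True xy by (simp add: algebra_simps)
  next
    case False
    show ?thesis
    proof (cases "0 \<le> y")
      case True
      have "x * (1 + \<bar>y\<bar>) < 0" using False py by (simp add: mult_neg_pos)
      moreover have "0 \<le> y * (1 + \<bar>x\<bar>)" using True px by simp
      ultimately show ?thesis by linarith
    next
      case F2: False
      then show ?thesis using False xy by (simp add: algebra_simps)
    qed
  qed
  then show ?thesis by (rule frac_lt_aux[OF px py])
qed

lemma sig_bound: "-1 < (x::rat) / (1 + \<bar>x\<bar>) \<and> x / (1 + \<bar>x\<bar>) < 1"
proof -
  have px: "0 < 1 + \<bar>x\<bar>" by (auto simp: add_pos_nonneg)
  have "-1 * (1 + \<bar>x\<bar>) < x" "x < 1 * (1 + \<bar>x\<bar>)" by auto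
  then show ?thesis using px by (simp add: divide_simps)
qed

lemma hab_mono: "a < b \<Longrightarrow> x < y \<Longrightarrow> hab a b x < hab a b y"
proof -
  assume ab: "a < b" and xy: "x < y"
  have "(b - a) * (1 + x / (1 + \<bar>x\<bar>)) < (b - a) * (1 + y / (1 + \<bar>y\<bar>))"
    using sig_mono[OF xy] ab by (intro mult_strict_left_mono) auto
  then show ?thesis unfolding hab_def by (simp add: divide_strict_right_mono)
qed

lemma hab_bound: "a < b \<Longrightarrow> a < hab a b x \<and> hab a b x < b"
proof -
  assume ab: "a < b"
  have s: "0 < 1 + x / (1 + \<bar>x\<bar>)" "1 + x / (1 + \<bar>x\<bar>) < 2" using sig_bound[of x] by auto
  have "0 < (b - a) * (1 + x / (1 + \<bar>x\<bar>))" using ab s by auto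
  moreover have "(b - a) * (1 + x / (1 + \<bar>x\<bar>)) < (b - a) * 2"
    using ab s by (intro mult_strict_left_mono) auto
  ultimately show ?thesis unfolding hab_def by (auto simp: divide_simps)
qed



lemma ideal_bot: "ideal_of (I::'a::{semilattice_sup,order_bot} set) \<Longrightarrow> bot \<in> I"
  unfolding ideal_of_def by auto

lemma ideal_down: "ideal_of I \<Longrightarrow> x \<in> I \<Longrightarrow> y \<le> x \<Longrightarrow> y \<in> I"
  unfolding ideal_of_def by auto

lemma ideal_sup: "ideal_of (I::'a::semilattice_sup set) \<Longrightarrow> x \<in> I \<Longrightarrow> y \<in> I \<Longrightarrow> sup x y \<in> I"
proof -
  assume I: "ideal_of I" and x: "x \<in> I" and y: "y \<in> I"
  have "\<exists>z\<in>I. x \<le> z \<and> y \<le> z" using I x y unfolding ideal_of_def by fast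
  then obtain z where z: "z \<in> I" "x \<le> z" "y \<le> z" by blast
  then have "sup x y \<le> z" by simp
  then show ?thesis using I z(1) ideal_down by blast
qed

lemma ideal_fin:
  assumes I: "ideal_of (I::'a::{semilattice_sup,order_bot} set)" and fin: "finite S"
    and up: "\<And>s y y'. s \<in> S \<Longrightarrow> R s y \<Longrightarrow> y \<le> y' \<Longrightarrow> R s y'"
    and ex: "\<forall>s\<in>S. \<exists>y\<in>I. R s y"
  shows "\<exists>y\<in>I. \<forall>s\<in>S. R s y"
proof -
  have "S' \<subseteq> S \<Longrightarrow> \<exists>y\<in>I. \<forall>s\<in>S'. R s y" if "finite S'" for S'
    using that
  proof (induction S' rule: finite_induct)
    case empty
    have "bot \<in> I" using ideal_bot[OF I] .
    then show ?case by blast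
  next
    case (insert s S')
    obtain y where y: "y \<in> I" "\<forall>t\<in>S'. R t y" using insert by blast
    have sS: "s \<in> S" using insert by blast
    obtain y' where y': "y' \<in> I" "R s y'" using ex sS by blast
    have "sup y y' \<in> I" using ideal_sup[OF I y(1) y'(1)] .
    moreover have "\<forall>t\<in>insert s S'. R t (sup y y')"
    proof
      fix t assume "t \<in> insert s S'"
      then show "R t (sup y y')"
      proof
        assume "t = s" then show ?thesis using y' up[of s y' "sup y y'"] sS by simp
      next
        assume "t \<in> S'" then show ?thesis using y up[of t y "sup y y'"] insert.prems by auto
      qed
    qed
    ultimately show ?case by blast
  qed
  then show ?thesis using fin by blast
qed


locale cemb =
  fixes n :: nat and C :: "nat \<Rightarrow> 'a::{semilattice_sup,order_bot} set"
    and le :: "nat \<Rightarrow> 'a \<Rightarrow> 'a \<Rightarrow> bool" and f :: "nat \<Rightarrow> 'a \<Rightarrow> 'a"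
  assumes lrefl: "i<n \<Longrightarrow> x\<in>C i \<Longrightarrow> le i x x"
  and lanti: "i<n \<Longrightarrow> x\<in>C i \<Longrightarrow> y\<in>C i \<Longrightarrow> le i x y \<Longrightarrow> le i y x \<Longrightarrow> x = y"
  and ltrans: "i<n \<Longrightarrow> x\<in>C i \<Longrightarrow> y\<in>C i \<Longrightarrow> z\<in>C i \<Longrightarrow> le i x y \<Longrightarrow> le i y z \<Longrightarrow> le i x z"
  and ltot: "i<n \<Longrightarrow> x\<in>C i \<Longrightarrow> y\<in>C i \<Longrightarrow> le i x y \<or> le i y x"
  and fC: "i<n \<Longrightarrow> f i x \<in> C i"
  and fsup: "i<n \<Longrightarrow> f i (sup x y) = (if le i (f i x) (f i y) then f i y else f i x)"
  and finj: "(\<forall>i<n. f i x = f i y) \<Longrightarrow> x = y"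
begin

abbreviation L :: "nat \<Rightarrow> 'a \<Rightarrow> 'a \<Rightarrow> bool" where "L i x y \<equiv> le i (f i x) (f i y)"

lemma Lrefl: "i<n \<Longrightarrow> L i x x" by (rule lrefl[OF _ fC])
lemma Ltrans: "i<n \<Longrightarrow> L i x y \<Longrightarrow> L i y z \<Longrightarrow> L i x z" by (rule ltrans[OF _ fC fC fC])
lemma Ltot: "i<n \<Longrightarrow> \<not> L i x y \<Longrightarrow> L i y x" using ltot[OF _ fC fC] by blast
lemma Lanti: "i<n \<Longrightarrow> L i x y \<Longrightarrow> L i y x \<Longrightarrow> f i x = f i y" by (rule lanti[OF _ fC fC])

lemma Lmono: "i<n \<Longrightarrow> x \<le> y \<Longrightarrow> L i x y"
proof -
  assume i: "i<n" and xy: "x \<le> y"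
  have "f i y = f i (sup x y)" using xy by (simp add: sup_absorb2)
  then show ?thesis using fsup[OF i, of x y] Lrefl[OF i, of x] by (auto split: if_splits)
qed

lemma Lreflect: "(\<forall>i<n. L i x y) \<Longrightarrow> x \<le> y"
proof -
  assume h: "\<forall>i<n. L i x y"
  have "\<forall>i<n. f i (sup x y) = f i y" using h fsup by auto
  then have "sup x y = y" using finj by blast
  then show ?thesis by (simp add: le_iff_sup)
qed

lemma Lsup_le: "i<n \<Longrightarrow> L i x z \<Longrightarrow> L i y z \<Longrightarrow> L i (sup x y) z"
  using fsup by auto

lemma Lsup_eq: "i<n \<Longrightarrow> L i y x \<Longrightarrow> f i (sup x y) = f i x"
proof -
  assume i: "i<n" and yx: "L i y x"
  show ?thesis
  proof (cases "L i x y")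
    case True then show ?thesis using fsup[OF i] Lanti[OF i True yx] by simp
  next
    case False then show ?thesis using fsup[OF i] by simp
  qed
qed

definition ab :: "nat \<Rightarrow> 'a set \<Rightarrow> 'a \<Rightarrow> bool" where
  "ab i I x \<longleftrightarrow> (\<forall>y\<in>I. \<not> L i x y)"

definition sti :: "nat \<Rightarrow> 'a set \<Rightarrow> 'a set \<Rightarrow> bool" where
  "sti i I I' \<longleftrightarrow> (\<exists>x\<in>I'. ab i I x)"

lemma ab_up: "i<n \<Longrightarrow> ab i I x \<Longrightarrow> x \<le> x' \<Longrightarrow> ab i I x'"
  unfolding ab_def
proof (intro ballI notI)
  fix y assume i: "i<n" and h: "\<forall>y\<in>I. \<not> L i x y" and xx: "x \<le> x'" and y: "y \<in> I" and l: "L i x' y"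
  have "L i x y" by (rule Ltrans[OF i Lmono[OF i xx] l])
  then show False using h y by blast
qed

lemma ab_anti: "I0 \<subseteq> I \<Longrightarrow> ab i I x \<Longrightarrow> ab i I0 x"
  unfolding ab_def by blast

lemma sti_mono: "I0 \<subseteq> I \<Longrightarrow> I' \<subseteq> I0' \<Longrightarrow> sti i I I' \<Longrightarrow> sti i I0 I0'"
  unfolding sti_def using ab_anti by blast

lemma strict_sti:
  assumes I: "ideal_of I" and I': "ideal_of I'" and sub: "I \<subseteq> I'" and ne: "I \<noteq> I'"
  shows "\<exists>i<n. sti i I I'"
proof (rule ccontr)
  assume "\<not> (\<exists>i<n. sti i I I')"
  then have h: "\<forall>i<n. \<forall>x\<in>I'. \<exists>y\<in>I. L i x y" unfolding sti_def ab_def by blast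
  obtain x where x: "x \<in> I'" "x \<notin> I" using sub ne by blast
  have "\<exists>y\<in>I. \<forall>i\<in>{..<n}. L i x y"
  proof (rule ideal_fin[OF I])
    show "finite {..<n}" by simp
    fix s y y' assume "s \<in> {..<n}" "L s x y" "y \<le> y'"
    then show "L s x y'" using Ltrans[OF _ _ Lmono] by blast
  next
    show "\<forall>s\<in>{..<n}. \<exists>y\<in>I. L s x y" using h x by blast
  qed
  then obtain y where "y \<in> I" "\<forall>i<n. L i x y" by auto
  then have "x \<le> y" "y \<in> I" using Lreflect by auto
  then show False using ideal_down[OF I] x by blast
qed

end



context cemb begin

lemma step1:
  fixes F :: "rat \<Rightarrow> 'a set"
  assumes Fmono: "\<And>q q'. q \<le> q' \<Longrightarrow> F q \<subseteq> F q'"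
  shows "m \<le> n \<Longrightarrow> \<exists>e K. strict_mono (e::rat\<Rightarrow>rat) \<and> K \<subseteq> {..<m}
     \<and> (\<forall>i\<in>K. \<forall>q q'. q<q' \<longrightarrow> sti i (F (e q)) (F (e q')))
     \<and> (\<forall>i<m. i\<notin>K \<longrightarrow> (\<forall>q q'. q<q' \<longrightarrow> \<not> sti i (F (e q)) (F (e q'))))"
proof (induction m)
  case 0
  show ?case by (rule exI[of _ id], rule exI[of _ "{}"]) (auto simp: strict_mono_def)
next
  case (Suc m)
  then obtain e K where e: "strict_mono (e::rat\<Rightarrow>rat)" and K: "K \<subseteq> {..<m}"
    and A: "\<forall>i\<in>K. \<forall>q q'. q<q' \<longrightarrow> sti i (F (e q)) (F (e q'))"
    and B: "\<forall>i<m. i\<notin>K \<longrightarrow> (\<forall>q q'. q<q' \<longrightarrow> \<not> sti i (F (e q)) (F (e q')))" by auto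
  show ?case
  proof (cases "\<forall>q q'. q<q' \<longrightarrow> sti m (F (e q)) (F (e q'))")
    case True
    show ?thesis
    proof (rule exI[of _ e], rule exI[of _ "insert m K"], intro conjI)
      show "strict_mono e" by (rule e)
      show "insert m K \<subseteq> {..<Suc m}" using K by auto
      show "\<forall>i\<in>insert m K. \<forall>q q'. q < q' \<longrightarrow> sti i (F (e q)) (F (e q'))" using A True by auto
      show "\<forall>i<Suc m. i \<notin> insert m K \<longrightarrow> (\<forall>q q'. q < q' \<longrightarrow> \<not> sti i (F (e q)) (F (e q')))"
        using B less_Suc_eq by auto
    qed
  next
    case False
    then obtain a b where ab: "a < b" and nst: "\<not> sti m (F (e a)) (F (e b))" by blast
    define e' where "e' = e \<circ> hab a b"
    have hm: "x < y \<Longrightarrow> hab a b x < hab a b y" for x y using hab_mono[OF ab] .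
    have e'm: "strict_mono e'" unfolding e'_def strict_mono_def using e hm by (simp add: strict_mono_def)
    show ?thesis
    proof (rule exI[of _ e'], rule exI[of _ K], intro conjI)
      show "strict_mono e'" by (rule e'm)
      show "K \<subseteq> {..<Suc m}" using K by auto
      show "\<forall>i\<in>K. \<forall>q q'::rat. q < q' \<longrightarrow> sti i (F (e' q)) (F (e' q'))"
        using A hm unfolding e'_def by auto
      show "\<forall>i<Suc m. i \<notin> K \<longrightarrow> (\<forall>q q'::rat. q < q' \<longrightarrow> \<not> sti i (F (e' q)) (F (e' q')))"
      proof (intro allI impI)
        fix i and q q' :: rat assume i: "i < Suc m" "i \<notin> K" and qq: "q < q'"
        show "\<not> sti i (F (e' q)) (F (e' q'))"
        proof (cases "i = m")
          case False
          then have "i < m" using i by auto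
          then show ?thesis using B i hm[OF qq] unfolding e'_def by auto
        next
          case True
          show ?thesis
          proof
            assume st: "sti i (F (e' q)) (F (e' q'))"
            have "a < hab a b q" "hab a b q' < b" using hab_bound[OF ab] by auto
            then have "e a \<le> e' q" "e' q' \<le> e b" unfolding e'_def using e
              by (auto simp: strict_mono_less_eq)
            then have "F (e a) \<subseteq> F (e' q)" "F (e' q') \<subseteq> F (e b)" using Fmono by auto
            then have "sti i (F (e a)) (F (e b))" using sti_mono st by blast
            then show False using nst True by simp
          qed
        qed
      qed
    qed
  qed
qed

end


lemma sup_absorb_helper: "(x::'a::semilattice_sup) \<le> sup a y \<Longrightarrow> sup a (sup x y) = sup a y"
proof -
  assume h: "x \<le> sup a y"
  have "sup x y \<le> sup a y" by (rule le_supI[OF h sup_ge2])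
  then have "sup a (sup x y) \<le> sup a y" by (rule le_supI[OF sup_ge1])
  moreover have "sup a y \<le> sup a (sup x y)" by (rule sup_mono[OF order_refl sup_ge2])
  ultimately show ?thesis by (rule order.antisym)
qed

context cemb begin

lemma core:
  fixes J :: "rat \<Rightarrow> 'a set" and K :: "nat set"
  assumes Jid: "\<And>q. ideal_of (J q)" and Jmono: "\<And>q q'. q \<le> q' \<Longrightarrow> J q \<subseteq> J q'"
  and KS: "K \<subseteq> {..<n}" and Kne: "K \<noteq> {}"
  and Kst: "\<And>i q q'. i\<in>K \<Longrightarrow> q<q' \<Longrightarrow> sti i (J q) (J q')"
  and nK: "\<And>i q q'. i<n \<Longrightarrow> i\<notin>K \<Longrightarrow> q<q' \<Longrightarrow> \<not> sti i (J q) (J q')"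
  and scat: "order_scattered_on (UNIV::'a set) (\<le>)"
  shows "has_Omega_eta TYPE('a)"
proof -
  obtain \<alpha>0 \<beta>0 :: "rat \<Rightarrow> rat" where g1: "\<And>q. \<alpha>0 q < \<beta>0 q"
    and g2: "\<And>q q'. q<q' \<Longrightarrow> \<beta>0 q < \<alpha>0 q'" using gap_exists by blast
  define \<alpha> where "\<alpha> q = hab 0 1 (\<alpha>0 q)" for q
  define \<beta> where "\<beta> q = hab 0 1 (\<beta>0 q)" for q
  have ab1: "\<alpha> q < \<beta> q" for q unfolding \<alpha>_def \<beta>_def using hab_mono[of 0 1] g1 by simp
  have ab2: "\<beta> q < \<alpha> q'" if "q < q'" for q q'
    unfolding \<alpha>_def \<beta>_def using hab_mono[of 0 1] g2[OF that] by simp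
  have apos: "0 < \<alpha> q" for q unfolding \<alpha>_def using hab_bound[of 0 1] by simp
  have bpos: "0 < \<beta> q" for q using apos[of q] ab1[of q] by simp
  have Kn: "i \<in> K \<Longrightarrow> i < n" for i using KS by auto
  have finK: "finite K" using KS finite_subset by blast
  have W: "\<exists>x\<in>J t. \<forall>i\<in>K. ab i (J s) x" if "s < t" for s t
  proof (rule ideal_fin[OF Jid finK])
    fix i y y' assume "i \<in> K" "ab i (J s) y" "y \<le> y'"
    then show "ab i (J s) y'" using ab_up Kn by blast
  next
    show "\<forall>i\<in>K. \<exists>y\<in>J t. ab i (J s) y" using Kst[OF _ that] unfolding sti_def by blast
  qed
  define c where "c q = (SOME x. x \<in> J (\<beta> q) \<and> (\<forall>i\<in>K. ab i (J (\<alpha> q)) x))" for q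
  have cprop: "c q \<in> J (\<beta> q) \<and> (\<forall>i\<in>K. ab i (J (\<alpha> q)) (c q))" for q
    unfolding c_def by (rule someI_ex) (use W[OF ab1[of q]] in blast)
  have c_in: "c q \<in> J (\<beta> q)" for q using cprop by blast
  have c_ab: "i \<in> K \<Longrightarrow> ab i (J (\<alpha> q)) (c q)" for i q using cprop by blast
  have c_nK: "\<exists>y\<in>J 0. L i (c q) y" if "i<n" "i\<notin>K" for i q
  proof -
    have "\<not> sti i (J 0) (J (\<beta> q))" using nK[OF that bpos] .
    then show ?thesis using c_in[of q] unfolding sti_def ab_def by blast
  qed
  have J0a: "J 0 \<subseteq> J (\<alpha> q)" for q using Jmono apos less_imp_le by blast
  have J0b: "J 0 \<subseteq> J (\<beta> q)" for q using Jmono bpos less_imp_le by blast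
  have Jba: "J (\<beta> q) \<subseteq> J (\<alpha> q')" if "q < q'" for q q' using Jmono ab2[OF that] less_imp_le by blast
  have sep: "\<not> L i (c q') x" if "i \<in> K" "x \<in> J (\<alpha> q')" for i q' x
    using c_ab[OF that(1)] that(2) unfolding ab_def by blast
  have cc_lt: "L i (c q) (c q')" if "i \<in> K" "q < q'" for i q q'
  proof -
    have "c q \<in> J (\<alpha> q')" using c_in Jba[OF that(2)] by blast
    then have "\<not> L i (c q') (c q)" by (rule sep[OF that(1)])
    then show ?thesis by (rule Ltot[OF Kn[OF that(1)]])
  qed
  show ?thesis
  proof (cases "\<exists>z\<in>J 0. \<forall>y\<in>J 0. \<forall>i<n. i\<notin>K \<longrightarrow> L i y z")
    case True
    then obtain z where z0: "z \<in> J 0" and zb: "\<And>y i. y\<in>J 0 \<Longrightarrow> i<n \<Longrightarrow> i\<notin>K \<Longrightarrow> L i y z"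
      by blast
    define x where "x q = sup z (c q)" for q
    have xin: "x q \<in> J (\<beta> q)" for q
      unfolding x_def using ideal_sup[OF Jid] J0b c_in z0 by blast
    have xle: "x q \<le> x q'" if qq: "q < q'" for q q'
    proof (rule Lreflect, intro allI impI)
      fix i assume i: "i < n"
      have zx: "L i z (x q')" unfolding x_def by (rule Lmono[OF i sup_ge1])
      show "L i (x q) (x q')"
      proof (cases "i \<in> K")
        case True
        have "L i (c q') (x q')" unfolding x_def by (rule Lmono[OF i sup_ge2])
        then have "L i (c q) (x q')" by (rule Ltrans[OF i cc_lt[OF True qq]])
        then show ?thesis unfolding x_def using Lsup_le[OF i] zx unfolding x_def by blast
      next
        case False
        obtain y where y: "y \<in> J 0" "L i (c q) y" using c_nK[OF i False] by blast
        have "L i (c q) z" using Ltrans[OF i y(2) zb[OF y(1) i False]] .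
        then have "L i (x q) z" unfolding x_def using Lsup_le[OF i] Lrefl[OF i] by blast
        then show ?thesis by (rule Ltrans[OF i _ zx])
      qed
    qed
    obtain i0 where i0: "i0 \<in> K" using Kne by blast
    have xne: "x q \<noteq> x q'" if qq: "q < q'" for q q'
    proof
      assume eq: "x q = x q'"
      have "x q \<in> J (\<alpha> q')" using xin Jba[OF qq] by blast
      then have "\<not> L i0 (c q') (x q)" using sep[OF i0] by blast
      moreover have "L i0 (c q') (x q')" unfolding x_def by (rule Lmono[OF Kn[OF i0] sup_ge2])
      ultimately show False using eq by simp
    qed
    have "\<not> order_scattered_on (UNIV::'a set) (\<le>)"
      unfolding order_scattered_on_def
    proof (intro notI, elim notE, rule exI[of _ x], intro conjI)
      show "range x \<subseteq> UNIV" by simp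
      show "inj x"
      proof (rule injI)
        fix q q' assume eqx: "x q = x q'"
        show "q = q'"
        proof (rule ccontr)
          assume "q \<noteq> q'"
          then consider "q < q'" | "q' < q" by linarith
          then show False
          proof cases
            case 1 then show ?thesis using xne[OF 1] eqx by simp
          next
            case 2 then show ?thesis using xne[OF 2] eqx by simp
          qed
        qed
      qed
      show "\<forall>q q'. (x q \<le> x q') = (q \<le> q')"
      proof (intro allI iffI)
        fix q q' assume h: "x q \<le> x q'"
        show "q \<le> q'"
        proof (rule ccontr)
          assume "\<not> q \<le> q'"
          then have "q' < q" by simp
          then have "x q' \<le> x q" "x q' \<noteq> x q" using xle xne by auto
          then show False using h by simp
        qed
      next
        fix q q' :: rat assume "q \<le> q'"
        then show "x q \<le> x q'" using xle by (cases "q = q'") auto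
      qed
    qed
    then show ?thesis using scat by blast
  next
    case False
    then have nb: "\<exists>y\<in>J 0. \<exists>i<n. i\<notin>K \<and> \<not> L i y z" if "z\<in>J 0" for z using that by blast
    define nx where "nx z = (SOME y. y\<in>J 0 \<and> (\<exists>i<n. i\<notin>K \<and> \<not> L i y z))" for z
    have nx: "nx z \<in> J 0 \<and> (\<exists>i<n. i\<notin>K \<and> \<not> L i (nx z) z)" if "z \<in> J 0" for z
      unfolding nx_def by (rule someI_ex) (use nb[OF that] in blast)
    have Bex: "\<exists>y\<in>J 0. \<forall>p\<in>{..<n} \<times> {..<(2::nat)^m}. (fst p \<notin> K \<and> 0 < snd p) \<longrightarrow>
        L (fst p) (c (of_nat (snd p) / 2^m)) y" for m
    proof (rule ideal_fin[OF Jid])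
      show "finite ({..<n} \<times> {..<(2::nat)^m})" by simp
    next
      fix p y y' assume P: "p \<in> {..<n} \<times> {..<(2::nat)^m}"
        and IH: "fst p \<notin> K \<and> 0 < snd p \<longrightarrow> L (fst p) (c (of_nat (snd p) / 2 ^ m)) y" and Y: "y \<le> y'"
      show "fst p \<notin> K \<and> 0 < snd p \<longrightarrow> L (fst p) (c (of_nat (snd p) / 2 ^ m)) y'"
      proof
        assume h: "fst p \<notin> K \<and> 0 < snd p"
        have pn: "fst p < n" using P by auto
        have "L (fst p) (c (of_nat (snd p) / 2 ^ m)) y" using h IH by blast
        then show "L (fst p) (c (of_nat (snd p) / 2 ^ m)) y'" by (rule Ltrans[OF pn _ Lmono[OF pn Y]])
      qed
    next
      show "\<forall>p\<in>{..<n} \<times> {..<(2::nat)^m}. \<exists>y\<in>J 0. fst p \<notin> K \<and> 0 < snd p \<longrightarrow>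
          L (fst p) (c (of_nat (snd p) / 2 ^ m)) y"
      proof
        fix p assume p: "p \<in> {..<n} \<times> {..<(2::nat)^m}"
        show "\<exists>y\<in>J 0. fst p \<notin> K \<and> 0 < snd p \<longrightarrow> L (fst p) (c (of_nat (snd p) / 2 ^ m)) y"
        proof (cases "fst p \<notin> K")
          case True
          have "fst p < n" using p by auto
          then show ?thesis using c_nK[OF _ True] by blast
        next
          case False
          then show ?thesis using ideal_bot[OF Jid] by blast
        qed
      qed
    qed
    define B where "B m = (SOME y. y\<in>J 0 \<and> (\<forall>p\<in>{..<n} \<times> {..<(2::nat)^m}. (fst p \<notin> K \<and> 0 < snd p) \<longrightarrow>
        L (fst p) (c (of_nat (snd p) / 2^m)) y))" for m
    have Bp: "B m \<in> J 0 \<and> (\<forall>p\<in>{..<n} \<times> {..<(2::nat)^m}. (fst p \<notin> K \<and> 0 < snd p) \<longrightarrow>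
        L (fst p) (c (of_nat (snd p) / 2^m)) (B m))" for m
      unfolding B_def by (rule someI_ex) (use Bex[of m] in blast)
    have B0: "B m \<in> J 0" for m using Bp by blast
    have Bdom: "L i (c (of_nat k / 2^m)) (B m)" if "i<n" "i\<notin>K" "0<k" "k<2^m" for i k m
      using Bp[of m] that by auto
    define a where "a = rec_nat bot (\<lambda>m am. sup (sup am (nx am)) (B (Suc m)))"
    have a0: "a 0 = bot" unfolding a_def by simp
    have aS: "a (Suc m) = sup (sup (a m) (nx (a m))) (B (Suc m))" for m unfolding a_def by simp
    have ain: "a m \<in> J 0" for m
    proof (induction m)
      case 0 then show ?case using a0 ideal_bot[OF Jid] by simp
    next
      case (Suc m) then show ?case using aS ideal_sup[OF Jid] nx B0 by simp
    qed
    have astep: "a m \<le> a (Suc m)" for m unfolding aS by (simp add: le_supI1)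
    have amono: "m \<le> m' \<Longrightarrow> a m \<le> a m'" for m m'
      using lift_Suc_mono_le[of a, OF astep] by blast
    have astrict: "\<exists>i<n. i\<notin>K \<and> f i (a m) \<noteq> f i (a m')" if "m < m'" for m m'
    proof -
      obtain i where i: "i<n" "i\<notin>K" "\<not> L i (nx (a m)) (a m)" using nx[OF ain[of m]] by blast
      have "nx (a m) \<le> a (Suc m)" unfolding aS by (simp add: le_supI1 le_supI2)
      also have "a (Suc m) \<le> a m'" using amono that by simp
      finally have "L i (nx (a m)) (a m')" using Lmono[OF i(1)] by blast
      then have "f i (a m) \<noteq> f i (a m')" using i(3) by auto
      then show ?thesis using i by blast
    qed
    have dom: "L i (c r) (a m)" if om: "(m,r) \<in> Omega_eta" and r0: "0 < r" and i: "i<n" "i\<notin>K" for m r i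
    proof -
      from om have r1: "r < 1" and rz: "r * 2^m \<in> \<int>" unfolding Omega_eta_def by auto
      obtain k :: int where k: "r * 2^m = of_int k" using rz by (auto elim: Ints_cases)
      have kpos: "0 < k"
      proof -
        have "0 < r * 2^m" using r0 by simp
        then show ?thesis using k by simp
      qed
      have klt: "k < 2^m"
      proof -
        have "r * 2^m < 1 * 2^m" using r1 by (intro mult_strict_right_mono) auto
        then have "(of_int k :: rat) < of_int (2^m)" using k by simp
        then show ?thesis by (simp only: of_int_less_iff)
      qed
      have m0: "m \<noteq> 0"
      proof
        assume "m = 0" then show False using kpos klt by simp
      qed
      then obtain m0 where mS: "m = Suc m0" by (cases m) auto
      have rk: "r = of_nat (nat k) / 2^m" using k kpos by (simp add: field_simps)
      have "nat k < 2^m" using klt kpos by (simp add: nat_less_iff)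
      then have "L i (c r) (B m)" using Bdom[OF i, of "nat k" m] kpos rk by simp
      moreover have "B m \<le> a m" unfolding mS aS by (simp add: le_supI2)
      ultimately show ?thesis by (rule Ltrans[OF i(1) _ Lmono[OF i(1)]])
    qed
    define cc where "cc r = (if r = 0 then bot else c r)" for r
    define g where "g p = sup (a (fst p)) (cc (snd p))" for p :: "nat \<times> rat"
    have gJ: "g (m,r) \<in> J (\<alpha> s)" if "(m,r) \<in> Omega_eta" "r < s" for m r s
    proof -
      have "a m \<in> J (\<alpha> s)" using ain J0a by blast
      moreover have "cc r \<in> J (\<alpha> s)"
      proof (cases "r = 0")
        case True then show ?thesis unfolding cc_def using ideal_bot[OF Jid] by simp
      next
        case False then show ?thesis unfolding cc_def using c_in Jba[OF that(2)] by auto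
      qed
      ultimately show ?thesis unfolding g_def using ideal_sup[OF Jid] by simp
    qed
    have gsep: "g (m,r) \<noteq> g (m',s)" if o1: "(m,r) \<in> Omega_eta" and o2: "(m',s) \<in> Omega_eta" and rs: "r < s"
      for m r m' s
    proof
      assume eq: "g (m,r) = g (m',s)"
      have "0 \<le> r" using o1 unfolding Omega_eta_def by auto
      then have s0: "s \<noteq> 0" using rs by auto
      obtain i where i: "i \<in> K" using Kne by blast
      have "\<not> L i (c s) (g (m,r))" using sep[OF i gJ[OF o1 rs]] .
      moreover have "L i (c s) (g (m',s))" using Lmono[OF Kn[OF i] sup_ge2] s0 unfolding g_def cc_def by simp
      ultimately show False using eq by simp
    qed
    have gnK: "f i (g (m,r)) = f i (a m)" if o: "(m,r) \<in> Omega_eta" and i: "i<n" "i\<notin>K" for m r i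
    proof -
      have "L i (cc r) (a m)"
      proof (cases "r = 0")
        case True then show ?thesis unfolding cc_def using Lmono[OF i(1)] by simp
      next
        case False
        have "0 \<le> r" using o unfolding Omega_eta_def by auto
        then have "0 < r" using False by simp
        then show ?thesis unfolding cc_def using dom[OF o _ i] False by simp
      qed
      then show ?thesis unfolding g_def using Lsup_eq[OF i(1)] by simp
    qed
    have ginj: "inj_on g Omega_eta"
    proof (rule inj_onI)
      fix p p' assume p: "p \<in> Omega_eta" and p': "p' \<in> Omega_eta" and eq: "g p = g p'"
      obtain m r where mr: "p = (m,r)" by (cases p)
      obtain m' s where ms: "p' = (m',s)" by (cases p')
      have rs: "r = s"
      proof (rule ccontr)
        assume "r \<noteq> s"
        then consider "r < s" | "s < r" by linarith
        then show False
        proof cases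
          case 1 then show False using gsep[of m r m' s] p p' eq mr ms by simp
        next
          case 2 then show False using gsep[of m' s m r] p p' eq mr ms by simp
        qed
      qed
      have fe: "\<forall>i<n. i\<notin>K \<longrightarrow> f i (a m) = f i (a m')"
      proof (intro allI impI)
        fix i assume i: "i < n" "i \<notin> K"
        have "f i (g (m,r)) = f i (g (m',s))" using eq mr ms by simp
        then show "f i (a m) = f i (a m')"
          using gnK[OF p[unfolded mr] i] gnK[OF p'[unfolded ms] i] rs by simp
      qed
      have "m = m'"
      proof (rule ccontr)
        assume "m \<noteq> m'"
        then consider "m < m'" | "m' < m" by linarith
        then show False
        proof cases
          case 1
          obtain i where "i<n" "i\<notin>K" "f i (a m) \<noteq> f i (a m')" using astrict[OF 1] by blast
          then show False using fe by simp
        next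
          case 2
          obtain i where "i<n" "i\<notin>K" "f i (a m') \<noteq> f i (a m)" using astrict[OF 2] by blast
          then show False using fe by simp
        qed
      qed
      then show "p = p'" using mr ms rs by simp
    qed
    have ccle: "cc r \<le> sup (a M) (cc s)"
      if o1: "(m,r) \<in> Omega_eta" and o2: "(m',s) \<in> Omega_eta" and rs: "r \<le> s" and mM: "m \<le> M"
      for m r m' s M
    proof (cases "r = s \<or> r = 0")
      case True then show ?thesis unfolding cc_def by auto
    next
      case False
      have r0: "0 < r" using False o1 unfolding Omega_eta_def by auto
      have rs': "r < s" using rs False by auto
      have s0: "s \<noteq> 0" using r0 rs' by auto
      have "c r \<le> sup (a M) (c s)"
      proof (rule Lreflect, intro allI impI)
        fix i assume i: "i < n"
        show "L i (c r) (sup (a M) (c s))"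
        proof (cases "i \<in> K")
          case True
          have "L i (c r) (c s)" using cc_lt[OF True rs'] .
          then show ?thesis by (rule Ltrans[OF i _ Lmono[OF i sup_ge2]])
        next
          case False
          have "L i (c r) (a m)" using dom[OF o1 r0 i False] .
          moreover have "a m \<le> sup (a M) (c s)" using amono[OF mM] by (meson le_supI1)
          ultimately show ?thesis by (rule Ltrans[OF i _ Lmono[OF i]])
        qed
      qed
      then show ?thesis unfolding cc_def using False s0 by simp
    qed
    have gjoin: "g (pair_join p p') = sup (g p) (g p')"
      if p: "p \<in> Omega_eta" and p': "p' \<in> Omega_eta" for p p'
    proof -
      obtain m r where mr: "p = (m,r)" by (cases p)
      obtain m' s where ms: "p' = (m',s)" by (cases p')
      let ?M = "max m m'"
      have aM: "sup (a m) (a m') = a ?M"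
        using amono[of m ?M] amono[of m' ?M]
        by (cases "m \<le> m'") (auto simp: sup_absorb1 sup_absorb2)
      have rhs: "sup (g p) (g p') = sup (a ?M) (sup (cc r) (cc s))"
      proof -
        have "sup (g p) (g p') = sup (sup (a m) (a m')) (sup (cc r) (cc s))"
          unfolding g_def mr ms by (simp add: sup_aci)
        then show ?thesis using aM by simp
      qed
      show ?thesis
      proof (cases "r \<le> s")
        case True
        have "cc r \<le> sup (a ?M) (cc s)" using ccle[OF p[unfolded mr] p'[unfolded ms] True] by simp
        then have "sup (a ?M) (sup (cc r) (cc s)) = sup (a ?M) (cc s)"
          by (rule sup_absorb_helper)
        then show ?thesis using rhs True unfolding g_def mr ms pair_join_def by (simp add: max_def)
      next
        case False
        then have sr: "s \<le> r" by simp
        have "cc s \<le> sup (a ?M) (cc r)" using ccle[OF p'[unfolded ms] p[unfolded mr] sr] by simp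
        then have "sup (a ?M) (sup (cc s) (cc r)) = sup (a ?M) (cc r)"
          by (rule sup_absorb_helper)
        then have "sup (a ?M) (sup (cc r) (cc s)) = sup (a ?M) (cc r)"
          by (simp add: sup_commute)
        then show ?thesis using rhs False unfolding g_def mr ms pair_join_def by (simp add: max_def)
      qed
    qed
    show ?thesis unfolding has_Omega_eta_def using ginj gjoin by blast
  qed
qed

end


lemma principal_ideal: "ideal_of {y. y \<le> (x::'a::order)}"
  unfolding ideal_of_def by (auto dest: order.trans)

lemma scat_from_ideals:
  assumes "order_scattered_on (Ideals :: 'a::{semilattice_sup,order_bot} set set) (\<subseteq>)"
  shows "order_scattered_on (UNIV :: 'a set) (\<le>)"
  unfolding order_scattered_on_def
proof
  assume "\<exists>f :: rat \<Rightarrow> 'a. range f \<subseteq> UNIV \<and> inj f \<and> (\<forall>x y. (f x \<le> f y) = (x \<le> y))"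
  then obtain f :: "rat \<Rightarrow> 'a" where inj: "inj f" and ord: "\<And>x y. (f x \<le> f y) = (x \<le> y)" by blast
  define F where "F q = {y. y \<le> f q}" for q
  have FI: "range F \<subseteq> Ideals" unfolding Ideals_def F_def using principal_ideal by blast
  have Fsub: "(F x \<subseteq> F y) = (x \<le> y)" for x y
  proof
    assume "F x \<subseteq> F y"
    then have "f x \<le> f y" unfolding F_def by blast
    then show "x \<le> y" using ord by blast
  next
    assume "x \<le> y"
    then have "f x \<le> f y" using ord by blast
    then show "F x \<subseteq> F y" unfolding F_def using order.trans by blast
  qed
  have "inj F"
  proof (rule injI)
    fix x y assume "F x = F y"
    then have "x \<le> y" "y \<le> x" using Fsub by auto
    then show "x = y" by simp
  qed
  then show False using assms FI Fsub unfolding order_scattered_on_def by blast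
qed

lemma Omega_join_closed: "a \<in> Omega_eta \<Longrightarrow> b \<in> Omega_eta \<Longrightarrow> pair_join a b \<in> Omega_eta"
proof -
  assume a: "a \<in> Omega_eta" and b: "b \<in> Omega_eta"
  obtain m r where mr: "a = (m,r)" by (cases a)
  obtain m' s where ms: "b = (m',s)" by (cases b)
  have A: "0 \<le> r" "r < 1" "r * 2^m \<in> \<int>" using a mr unfolding Omega_eta_def by auto
  have B: "0 \<le> s" "s < 1" "s * 2^m' \<in> \<int>" using b ms unfolding Omega_eta_def by auto
  let ?M = "max m m'"
  have int: "t * 2^?M \<in> \<int>" if "t * 2^k \<in> \<int>" "k \<le> ?M" for t :: rat and k
  proof -
    have "(2::rat)^?M = 2^k * 2^(?M - k)" using that(2) by (metis le_add_diff_inverse power_add)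
    then have e: "t * 2^?M = (t * 2^k) * 2^(?M - k)" by (metis mult.assoc)
    have "(2::rat)^(?M - k) \<in> \<int>" by (intro Ints_power) simp
    then show ?thesis unfolding e by (rule Ints_mult[OF that(1)])
  qed
  have "max r s * 2^?M \<in> \<int>" using int[OF A(3)] int[OF B(3)] by (cases "r \<le> s") (auto simp: max_def)
  then show ?thesis using A B mr ms unfolding Omega_eta_def pair_join_def by auto
qed

lemma dyadic_between:
  assumes "(t::rat) < t'"
  shows "\<exists>m k. t \<le> of_int k / 2^m \<and> of_int k / 2^m < t'"
proof -
  obtain m :: nat where m: "1 < of_nat m * (t' - t)" using ex_less_of_nat_mult[of "t' - t" 1] assms by auto
  have "(of_nat m :: rat) < 2^m" using of_nat_less_two_power by blast
  then have "of_nat m * (t' - t) < 2^m * (t' - t)" using assms by (intro mult_strict_right_mono) auto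
  with m have big: "1 < 2^m * (t' - t)" by simp
  define k where "k = \<lceil>t * 2^m\<rceil>"
  have k1: "t * 2^m \<le> of_int k" unfolding k_def by simp
  have k2: "of_int k < t * 2^m + 1" unfolding k_def by linarith
  have p: "(0::rat) < 2^m" by simp
  have "t \<le> of_int k / 2^m" using k1 p by (simp add: field_simps)
  moreover have "of_int k < t' * 2^m" using k2 big by (simp add: algebra_simps)
  then have "of_int k / 2^m < t'" using p by (simp add: field_simps)
  ultimately show ?thesis by blast
qed

lemma omega_not_scat:
  assumes "has_Omega_eta TYPE('a::{semilattice_sup,order_bot})"
  shows "\<not> order_scattered_on (Ideals :: 'a set set) (\<subseteq>)"
proof -
  obtain g :: "nat \<times> rat \<Rightarrow> 'a" where ginj: "inj_on g Omega_eta"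
    and gj: "\<And>a b. a\<in>Omega_eta \<Longrightarrow> b\<in>Omega_eta \<Longrightarrow> g (pair_join a b) = sup (g a) (g b)"
    using assms unfolding has_Omega_eta_def by blast
  have gle: "snd a \<le> snd b" if a: "a \<in> Omega_eta" and b: "b \<in> Omega_eta" and le: "g a \<le> g b" for a b
  proof -
    have "g (pair_join a b) = g b" using gj[OF a b] le by (simp add: sup_absorb2)
    then have "pair_join a b = b" using ginj Omega_join_closed[OF a b] b by (meson inj_onD)
    then show ?thesis unfolding pair_join_def by (metis max.cobounded1 snd_conv)
  qed
  define I where "I t = {y. \<exists>p\<in>Omega_eta. snd p < t \<and> y \<le> g p}" for t
  have Iid: "ideal_of (I t)" if "0 < t" for t
    unfolding ideal_of_def
  proof (intro conjI ballI allI impI)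
    have "(0,0) \<in> Omega_eta" unfolding Omega_eta_def by simp
    then have "g (0,0) \<in> I t" unfolding I_def using that by (auto intro!: bexI[of _ "(0,0)"])
    then show "I t \<noteq> {}" by blast
  next
    fix x y assume "x \<in> I t" "y \<le> x"
    then show "y \<in> I t" unfolding I_def using order.trans by blast
  next
    fix x y assume x: "x \<in> I t" and y: "y \<in> I t"
    then obtain p p' where p: "p\<in>Omega_eta" "snd p < t" "x \<le> g p"
      and p': "p'\<in>Omega_eta" "snd p' < t" "y \<le> g p'" unfolding I_def by blast
    have "snd (pair_join p p') < t" using p(2) p'(2) by (simp add: pair_join_def)
    then have "g (pair_join p p') \<in> I t" unfolding I_def
      using Omega_join_closed[OF p(1) p'(1)] by blast
    moreover have "x \<le> g (pair_join p p')" "y \<le> g (pair_join p p')"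
      using gj[OF p(1) p'(1)] p(3) p'(3) by (auto intro: le_supI1 le_supI2)
    ultimately show "\<exists>z\<in>I t. x \<le> z \<and> y \<le> z" by blast
  qed
  have Imono: "I t \<subseteq> I t'" if tt: "t \<le> t'" for t t'
  proof
    fix y assume "y \<in> I t"
    then obtain p where p: "p \<in> Omega_eta" "snd p < t" "y \<le> g p" unfolding I_def by blast
    have "snd p < t'" using p(2) tt by (rule less_le_trans)
    then show "y \<in> I t'" unfolding I_def using p by blast
  qed
  have Istrict: "\<not> I t' \<subseteq> I t" if tt: "t < t'" "0 < t" "t' \<le> 1" for t t'
  proof
    assume sub: "I t' \<subseteq> I t"
    obtain m k where mk: "t \<le> of_int k / 2^m" "of_int k / 2^m < t'" using dyadic_between[OF tt(1)] by blast
    define d where "d = (of_int k :: rat) / 2^m"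
    have d0: "0 \<le> d" using mk tt unfolding d_def by linarith
    have d1: "d < 1" using mk tt unfolding d_def by linarith
    have dz: "d * 2^m \<in> \<int>" unfolding d_def by simp
    have om: "(m, d) \<in> Omega_eta" unfolding Omega_eta_def using d0 d1 dz by blast
    have "snd (m,d) < t'" using mk unfolding d_def by simp
    then have "g (m,d) \<in> I t'" unfolding I_def using om by blast
    then have "g (m,d) \<in> I t" using sub by blast
    then obtain p where p: "p \<in> Omega_eta" "snd p < t" "g (m,d) \<le> g p" unfolding I_def by blast
    have "d \<le> snd p" using gle[OF om p(1) p(3)] by simp
    then show False using p(2) mk d_def by simp
  qed
  define F where "F q = I (hab 0 1 q)" for q
  have hb: "0 < hab 0 1 q" "hab 0 1 q < 1" for q using hab_bound[of 0 1 q] by auto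
  have FI: "range F \<subseteq> Ideals" unfolding Ideals_def F_def using Iid hb by blast
  have Fsub: "(F x \<subseteq> F y) = (x \<le> y)" for x y
  proof
    assume h: "F x \<subseteq> F y"
    show "x \<le> y"
    proof (rule ccontr)
      assume "\<not> x \<le> y"
      then have "hab 0 1 y < hab 0 1 x" using hab_mono[of 0 1 y x] by simp
      moreover have "0 < hab 0 1 y" "hab 0 1 x \<le> 1" using hb[of y] hb[of x] by auto
      ultimately have "\<not> I (hab 0 1 x) \<subseteq> I (hab 0 1 y)" by (rule Istrict)
      then show False using h unfolding F_def by blast
    qed
  next
    assume "x \<le> y"
    then have "hab 0 1 x \<le> hab 0 1 y" using hab_mono[of 0 1 x y] by (cases "x = y") auto
    then show "F x \<subseteq> F y" unfolding F_def by (rule Imono)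
  qed
  have "inj F"
  proof (rule injI)
    fix x y assume "F x = F y"
    then have "x \<le> y" "y \<le> x" using Fsub by auto
    then show "x = y" by simp
  qed
  then show ?thesis unfolding order_scattered_on_def using FI Fsub by blast
qed


theorem theorem9p7:
  fixes n :: nat
  assumes "join_dim TYPE('a::{semilattice_sup, order_bot}) = enat n"
  shows "order_scattered_on (Ideals :: 'a set set) (\<subseteq>) \<longleftrightarrow>
           (order_scattered_on (UNIV :: 'a set) (\<le>) \<and> \<not> has_Omega_eta TYPE('a))"
proof -
  have "\<exists>m. join_embeds_chains TYPE('a) m"
  proof (rule ccontr)
    assume "\<not> (\<exists>m. join_embeds_chains TYPE('a) m)"
    then have "join_dim TYPE('a) = \<infinity>" unfolding join_dim_def by simp
    then show False using assms by simp
  qed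
  then obtain m and C :: "nat \<Rightarrow> 'a set" and le :: "nat \<Rightarrow> 'a \<Rightarrow> 'a \<Rightarrow> bool" and f :: "nat \<Rightarrow> 'a \<Rightarrow> 'a"
    where H: "\<forall>i<m. (\<forall>x\<in>C i. le i x x)
             \<and> (\<forall>x\<in>C i. \<forall>y\<in>C i. le i x y \<and> le i y x \<longrightarrow> x = y)
             \<and> (\<forall>x\<in>C i. \<forall>y\<in>C i. \<forall>z\<in>C i. le i x y \<and> le i y z \<longrightarrow> le i x z)
             \<and> (\<forall>x\<in>C i. \<forall>y\<in>C i. le i x y \<or> le i y x)"
      and H2: "\<forall>i<m. \<forall>x. f i x \<in> C i"
      and H3: "\<forall>i<m. \<forall>x y. f i (sup x y) = (if le i (f i x) (f i y) then f i y else f i x)"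
      and H4: "\<forall>x y. (\<forall>i<m. f i x = f i y) \<longrightarrow> x = y"
    unfolding join_embeds_chains_def by (elim exE conjE) (rule that; assumption)
  have Hi: "(\<forall>x\<in>C i. le i x x)
             \<and> (\<forall>x\<in>C i. \<forall>y\<in>C i. le i x y \<and> le i y x \<longrightarrow> x = y)
             \<and> (\<forall>x\<in>C i. \<forall>y\<in>C i. \<forall>z\<in>C i. le i x y \<and> le i y z \<longrightarrow> le i x z)
             \<and> (\<forall>x\<in>C i. \<forall>y\<in>C i. le i x y \<or> le i y x)" if "i < m" for i
    by (rule H[rule_format, OF that])
  interpret E: cemb m C le f
  proof
    fix i x y z
    assume i: "i < m"
    note A = Hi[OF i]
    show "x \<in> C i \<Longrightarrow> le i x x"
      by (rule A[THEN conjunct1, rule_format])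
    show "x \<in> C i \<Longrightarrow> y \<in> C i \<Longrightarrow> le i x y \<Longrightarrow> le i y x \<Longrightarrow> x = y"
      by (rule A[THEN conjunct2, THEN conjunct1, rule_format], assumption+, rule conjI)
    show "x \<in> C i \<Longrightarrow> y \<in> C i \<Longrightarrow> z \<in> C i \<Longrightarrow> le i x y \<Longrightarrow> le i y z \<Longrightarrow> le i x z"
      by (rule A[THEN conjunct2, THEN conjunct2, THEN conjunct1, rule_format], assumption+, rule conjI)
    show "x \<in> C i \<Longrightarrow> y \<in> C i \<Longrightarrow> le i x y \<or> le i y x"
      by (rule A[THEN conjunct2, THEN conjunct2, THEN conjunct2, rule_format])
  next
    fix i x assume "i < m"
    then show "f i x \<in> C i" using H2 by simp
  next
    fix i x y assume "i < m"
    then show "f i (sup x y) = (if le i (f i x) (f i y) then f i y else f i x)" using H3 by simp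
  next
    fix x y assume "\<forall>i<m. f i x = f i y"
    then show "x = y" using H4 by simp
  qed
  show ?thesis
  proof
    assume L: "order_scattered_on (Ideals :: 'a set set) (\<subseteq>)"
    show "order_scattered_on (UNIV :: 'a set) (\<le>) \<and> \<not> has_Omega_eta TYPE('a)"
      using scat_from_ideals[OF L] omega_not_scat L by blast
  next
    assume R: "order_scattered_on (UNIV :: 'a set) (\<le>) \<and> \<not> has_Omega_eta TYPE('a)"
    show "order_scattered_on (Ideals :: 'a set set) (\<subseteq>)"
    proof (rule ccontr)
      assume "\<not> order_scattered_on (Ideals :: 'a set set) (\<subseteq>)"
      then obtain F :: "rat \<Rightarrow> 'a set" where FI: "range F \<subseteq> Ideals" and Finj: "inj F"
        and Fsub: "\<And>x y. (F x \<subseteq> F y) = (x \<le> y)" unfolding order_scattered_on_def by blast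
      have Fid: "ideal_of (F q)" for q using FI unfolding Ideals_def by blast
      have Fmono: "q \<le> q' \<Longrightarrow> F q \<subseteq> F q'" for q q' using Fsub by blast
      obtain e K where e: "strict_mono (e::rat\<Rightarrow>rat)" and K: "K \<subseteq> {..<m}"
        and A: "\<forall>i\<in>K. \<forall>q q'. q<q' \<longrightarrow> E.sti i (F (e q)) (F (e q'))"
        and B: "\<forall>i<m. i\<notin>K \<longrightarrow> (\<forall>q q'. q<q' \<longrightarrow> \<not> E.sti i (F (e q)) (F (e q')))"
        using E.step1[where F=F, OF Fmono order_refl] by blast
      define J where "J q = F (e q)" for q
      have Jid: "ideal_of (J q)" for q unfolding J_def by (rule Fid)
      have Jmono: "q \<le> q' \<Longrightarrow> J q \<subseteq> J q'" for q q'
        unfolding J_def using Fmono e by (simp add: strict_mono_less_eq)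
      have e01: "e 0 < e 1" using e by (simp add: strict_mono_def)
      have "J 0 \<subseteq> J 1" using Jmono by simp
      moreover have "J 0 \<noteq> J 1" unfolding J_def using Finj e01 by (metis injD less_irrefl)
      ultimately obtain i where i: "i < m" "E.sti i (J 0) (J 1)" using E.strict_sti[OF Jid Jid] by blast
      have iK: "i \<in> K" using B i unfolding J_def by force
      have KS: "K \<noteq> {}" using iK by blast
      have "has_Omega_eta TYPE('a)"
      proof (rule E.core[OF Jid Jmono K KS])
        show "\<And>i q q'. i \<in> K \<Longrightarrow> q < q' \<Longrightarrow> E.sti i (J q) (J q')" using A unfolding J_def by blast
        show "\<And>i q q'. i < m \<Longrightarrow> i \<notin> K \<Longrightarrow> q < q' \<Longrightarrow> \<not> E.sti i (J q) (J q')"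
          using B unfolding J_def by blast
        show "order_scattered_on (UNIV::'a set) (\<le>)" using R by blast
      qed
      then show False using R by blast
    qed
  qed
qed

end
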